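(* Let $G$ be a compact Lie group acting continuously on a metrizable space $X$. Then $$\max_{K\lhd G}\ \mathrm{cat}\big((X/K)^{G/K}\big)\ \le\ \mathrm{cat}_G(X),$$ where the maximum is over all closed normal subgroups $K$ of $G$ (not necessarily acting freely), $G/K$ acts on $X/K$ by $(gK)\cdot[x]_K=[gx]_K$, and $(X/K)^{G/K}$ denotes its fixed point set.
   Context: $\mathrm{cat}(Y)$ is the least $k$ such that $Y$ is covered by $k$ open sets each of whose inclusions into $Y$ is null-homotopic. For a $\Gamma$-space $Z$, $\mathrm{cat}_\Gamma(Z)$ is the least $k$ such that $Z$ is covered by $k$ $\Gamma$-invariant open sets $U_j$ such that each inclusion $U_j\hookrightarrow Z$ is $\Gamma$-homotopic to a $\Gamma$-map $c\colon U_j\to Z$ with $c(U_j)$ contained in a single $\Gamma$-orbit. *)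

theory Defs
  imports "HOL-Analysis.Analysis" "HOL-Algebra.Group_Action"
begin

definition topological_group :: "('g, 'b) monoid_scheme \<Rightarrow> 'g topology \<Rightarrow> bool" where
  "topological_group G TG \<longleftrightarrow>
     group G \<and> topspace TG = carrier G \<and> Hausdorff_space TG \<and>
     continuous_map (prod_topology TG TG) TG (\<lambda>(a, b). a \<otimes>\<^bsub>G\<^esub> b) \<and>
     continuous_map TG TG (\<lambda>a. inv\<^bsub>G\<^esub> a)"

definition locally_euclidean :: "'a topology \<Rightarrow> bool" where
  "locally_euclidean T \<longleftrightarrow>
     (\<exists>n. \<forall>a\<in>topspace T. \<exists>U V. openin T U \<and> a \<in> U \<and> openin (Euclidean_space n) V \<and>
          subtopology T U homeomorphic_space subtopology (Euclidean_space n) V)"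

text \<open>A compact Lie group, rendered as a compact Hausdorff topological group that is a
  (topological) manifold; by Gleason--Montgomery--Zippin this is the same as a compact Lie group.\<close>
definition compact_Lie_group :: "('g, 'b) monoid_scheme \<Rightarrow> 'g topology \<Rightarrow> bool" where
  "compact_Lie_group G TG \<longleftrightarrow>
     topological_group G TG \<and> compact_space TG \<and> locally_euclidean TG"

definition continuous_action ::
  "('g, 'b) monoid_scheme \<Rightarrow> 'g topology \<Rightarrow> 'x topology \<Rightarrow> ('g \<Rightarrow> 'x \<Rightarrow> 'x) \<Rightarrow> bool" where
  "continuous_action G TG X \<phi> \<longleftrightarrow>
     topological_group G TG \<and> group_action G (topspace X) \<phi> \<and>
     continuous_map (prod_topology TG X) X (\<lambda>(g, x). \<phi> g x)"

definition orbit_space_topology ::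
  "('g, 'b) monoid_scheme \<Rightarrow> 'x topology \<Rightarrow> ('g \<Rightarrow> 'x \<Rightarrow> 'x) \<Rightarrow> 'x set topology" where
  "orbit_space_topology K X \<phi> =
     topology (\<lambda>\<U>. \<U> \<subseteq> orbits K (topspace X) \<phi> \<and> openin X (\<Union>\<U>))"

text \<open>Fixed point set of the induced G/K action on X/K:
  orbits Q = [x]_K with [g x]_K = [x]_K for all g in G.\<close>
definition quotient_fixed_points ::
  "('g, 'b) monoid_scheme \<Rightarrow> 'g set \<Rightarrow> 'x topology \<Rightarrow> ('g \<Rightarrow> 'x \<Rightarrow> 'x) \<Rightarrow> 'x set set" where
  "quotient_fixed_points G K X \<phi> =
     {Q \<in> orbits (G\<lparr>carrier := K\<rparr>) (topspace X) \<phi>.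
        \<forall>g\<in>carrier G. \<forall>x\<in>Q. orbit (G\<lparr>carrier := K\<rparr>) \<phi> (\<phi> g x) = Q}"

definition fixed_point_space ::
  "('g, 'b) monoid_scheme \<Rightarrow> 'g set \<Rightarrow> 'x topology \<Rightarrow> ('g \<Rightarrow> 'x \<Rightarrow> 'x) \<Rightarrow> 'x set topology" where
  "fixed_point_space G K X \<phi> =
     subtopology (orbit_space_topology (G\<lparr>carrier := K\<rparr>) X \<phi>) (quotient_fixed_points G K X \<phi>)"

section \<open>Lusternik--Schnirelmann category (non-normalized) and its equivariant version\<close>

definition LS_cat :: "'a topology \<Rightarrow> enat" where
  "LS_cat Y = Inf {enat k | k. \<exists>U :: nat \<Rightarrow> 'a set.
      (\<forall>i<k. openin Y (U i) \<and>
         (\<exists>c. homotopic_with (\<lambda>_. True) (subtopology Y (U i)) Y id (\<lambda>_. c))) \<and>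
      topspace Y \<subseteq> (\<Union>i<k. U i)}"

definition equivariant_cat ::
  "('g, 'b) monoid_scheme \<Rightarrow> 'x topology \<Rightarrow> ('g \<Rightarrow> 'x \<Rightarrow> 'x) \<Rightarrow> enat" where
  "equivariant_cat G Z \<phi> = Inf {enat k | k. \<exists>U :: nat \<Rightarrow> 'x set.
      (\<forall>i<k. openin Z (U i) \<and> (\<forall>g\<in>carrier G. \<forall>x\<in>U i. \<phi> g x \<in> U i) \<and>
         (\<exists>c. homotopic_with
                 (\<lambda>h. \<forall>g\<in>carrier G. \<forall>x\<in>U i. h (\<phi> g x) = \<phi> g (h x))
                 (subtopology Z (U i)) Z id c \<and>
              (\<exists>z\<in>topspace Z. c ` (U i) \<subseteq> orbit G \<phi> z))) \<and>
      topspace Z \<subseteq> (\<Union>i<k. U i)}"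

end

theory Submission imports Defs begin

locale eqsetup =
  fixes G :: "('g,'b) monoid_scheme" and K :: "'g set" and X :: "'x topology" and \<phi> :: "'g \<Rightarrow> 'x \<Rightarrow> 'x"
  assumes ga: "group_action G (topspace X) \<phi>" and sub: "subgroup K G"
    and cont: "\<And>g. g \<in> carrier G \<Longrightarrow> continuous_map X X (\<phi> g)"
begin

sublocale group_action G "topspace X" \<phi> by (rule ga)

abbreviation "KK \<equiv> G\<lparr>carrier := K\<rparr>"
abbreviation "pq x \<equiv> orbit KK \<phi> x"

lemma orbK: "pq x = {\<phi> k x | k. k \<in> K}"
  by (simp add: orbit_def)

lemma Kcar: "k \<in> K \<Longrightarrow> k \<in> carrier G"
  using sub subgroup.subset by blast

lemma phi_closed: "g \<in> carrier G \<Longrightarrow> x \<in> topspace X \<Longrightarrow> \<phi> g x \<in> topspace X"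
  using element_image by blast

lemma phi_one: "x \<in> topspace X \<Longrightarrow> \<phi> \<one>\<^bsub>G\<^esub> x = x"
  by (metis id_eq_one restrict_apply')

lemma grpG: "group G"
  using group_hom unfolding group_hom_def by blast

lemma self_in: "x \<in> topspace X \<Longrightarrow> x \<in> pq x"
proof -
  assume x: "x \<in> topspace X"
  have "\<one>\<^bsub>G\<^esub> \<in> K" using sub subgroup.one_closed by blast
  moreover have "\<phi> \<one>\<^bsub>G\<^esub> x = x" using phi_one[OF x] .
  ultimately show ?thesis unfolding orbK by force
qed

lemma pi_sub: "x \<in> topspace X \<Longrightarrow> pq x \<subseteq> topspace X"
  unfolding orbK using phi_closed Kcar by blast

lemma pi_in: "x \<in> topspace X \<Longrightarrow> k \<in> K \<Longrightarrow> \<phi> k x \<in> pq x"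
  unfolding orbK by blast

lemma pq_E: "y \<in> pq x \<Longrightarrow> \<exists>k. k \<in> K \<and> y = \<phi> k x"
  unfolding orbK by blast

lemma pq_I: "k \<in> K \<Longrightarrow> w = \<phi> k x \<Longrightarrow> w \<in> pq x"
  unfolding orbK by blast

lemma K_inv: "k \<in> K \<Longrightarrow> inv\<^bsub>G\<^esub> k \<in> K" by (rule subgroup.m_inv_closed[OF sub])

lemma K_mult: "k \<in> K \<Longrightarrow> k' \<in> K \<Longrightarrow> k' \<otimes>\<^bsub>G\<^esub> k \<in> K" by (rule subgroup.m_closed[OF sub])

lemma pi_eq: assumes x: "x \<in> topspace X" and y: "y \<in> pq x" shows "pq y = pq x"
proof -
  obtain k where k: "k \<in> K" "y = \<phi> k x" using pq_E[OF y] by blast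
  have kG: "k \<in> carrier G" using Kcar k(1) .
  have ik: "inv\<^bsub>G\<^esub> k \<in> K" using K_inv[OF k(1)] .
  have A: "w \<in> pq x" if wh: "w \<in> pq y" for w
  proof -
    obtain k' where k': "k' \<in> K" "w = \<phi> k' y" using pq_E[OF wh] by blast
    have e: "\<phi> (k' \<otimes>\<^bsub>G\<^esub> k) x = \<phi> k' (\<phi> k x)" by (rule composition_rule[OF x Kcar[OF k'(1)] kG])
    have "w = \<phi> (k' \<otimes>\<^bsub>G\<^esub> k) x" unfolding e k'(2) k(2) ..
    then show ?thesis by (rule pq_I[OF K_mult[OF k(1) k'(1)]])
  qed
  have B: "w \<in> pq y" if wh: "w \<in> pq x" for w
  proof -
    obtain k' where k': "k' \<in> K" "w = \<phi> k' x" using pq_E[OF wh] by blast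
    have kk: "k' \<otimes>\<^bsub>G\<^esub> inv\<^bsub>G\<^esub> k \<in> K" using K_mult[OF ik k'(1)] .
    have e: "\<phi> ((k' \<otimes>\<^bsub>G\<^esub> inv\<^bsub>G\<^esub> k) \<otimes>\<^bsub>G\<^esub> k) x = \<phi> (k' \<otimes>\<^bsub>G\<^esub> inv\<^bsub>G\<^esub> k) (\<phi> k x)"
      by (rule composition_rule[OF x Kcar[OF kk] kG])
    have k'G: "k' \<in> carrier G" using Kcar k'(1) .
    have ikG: "inv\<^bsub>G\<^esub> k \<in> carrier G" using Kcar ik .
    have g: "(k' \<otimes>\<^bsub>G\<^esub> inv\<^bsub>G\<^esub> k) \<otimes>\<^bsub>G\<^esub> k = k'"
      proof -
        interpret grp: group G by (rule grpG)
        show ?thesis using k'G ikG kG by (simp add: grp.m_assoc)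
      qed
    have "w = \<phi> (k' \<otimes>\<^bsub>G\<^esub> inv\<^bsub>G\<^esub> k) y" using e unfolding g k(2) k'(2) by simp
    then show ?thesis by (rule pq_I[OF kk])
  qed
  show ?thesis using A B by blast
qed

lemma orbits_K: "orbits KK (topspace X) \<phi> = pq ` topspace X"
  by (auto simp: orbits_def)

lemma orbit_disj: "Q1 \<in> orbits KK (topspace X) \<phi> \<Longrightarrow> Q2 \<in> orbits KK (topspace X) \<phi> \<Longrightarrow> x \<in> Q1 \<Longrightarrow> x \<in> Q2 \<Longrightarrow> Q1 = Q2"
proof -
  assume Q1: "Q1 \<in> orbits KK (topspace X) \<phi>" and Q2: "Q2 \<in> orbits KK (topspace X) \<phi>" and x1: "x \<in> Q1" and x2: "x \<in> Q2"
  obtain a where a: "a \<in> topspace X" "Q1 = pq a" using Q1 unfolding orbits_K by blast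
  obtain b where b: "b \<in> topspace X" "Q2 = pq b" using Q2 unfolding orbits_K by blast
  have "pq x = pq a" using pi_eq[OF a(1)] x1 a(2) by simp
  moreover have "pq x = pq b" using pi_eq[OF b(1)] x2 b(2) by simp
  ultimately show ?thesis using a b by simp
qed

lemma orbit_of_mem: "Q \<in> orbits KK (topspace X) \<phi> \<Longrightarrow> x \<in> Q \<Longrightarrow> Q = pq x \<and> x \<in> topspace X"
proof -
  assume Q: "Q \<in> orbits KK (topspace X) \<phi>" and x: "x \<in> Q"
  obtain a where a: "a \<in> topspace X" "Q = pq a" using Q unfolding orbits_K by blast
  have "pq x = pq a" using pi_eq[OF a(1)] x a(2) by simp
  moreover have "x \<in> topspace X" using pi_sub[OF a(1)] x a(2) by blast
  ultimately show ?thesis using a by simp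
qed

lemma istop: "istopology (\<lambda>\<U>. \<U> \<subseteq> orbits KK (topspace X) \<phi> \<and> openin X (\<Union>\<U>))"
  unfolding istopology_def
proof (rule conjI; intro allI impI)
  fix S T assume S: "S \<subseteq> orbits KK (topspace X) \<phi> \<and> openin X (\<Union> S)" and T: "T \<subseteq> orbits KK (topspace X) \<phi> \<and> openin X (\<Union> T)"
  have "\<Union>(S \<inter> T) = \<Union>S \<inter> \<Union>T"
  proof
    show "\<Union>S \<inter> \<Union>T \<subseteq> \<Union>(S \<inter> T)"
    proof
      fix x assume "x \<in> \<Union>S \<inter> \<Union>T"
      then obtain A B where "A \<in> S" "B \<in> T" "x \<in> A" "x \<in> B" by blast
      then have "A = B" using S T orbit_disj by blast
      then show "x \<in> \<Union>(S \<inter> T)" using \<open>A \<in> S\<close> \<open>B \<in> T\<close> \<open>x \<in> A\<close> by blast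
    qed
  qed blast
  then show "S \<inter> T \<subseteq> orbits KK (topspace X) \<phi> \<and> openin X (\<Union> (S \<inter> T))" using S T by auto
next
  fix KS :: "'x set set set" assume "\<forall>K\<in>KS. K \<subseteq> orbits KK (topspace X) \<phi> \<and> openin X (\<Union> K)"
  then have h: "\<And>K. K \<in> KS \<Longrightarrow> K \<subseteq> orbits KK (topspace X) \<phi> \<and> openin X (\<Union> K)" by blast
  have o: "openin X (\<Union>(Union ` KS))" by (rule openin_Union) (use h in blast)
  have e: "\<Union>(\<Union>KS) = \<Union>(Union ` KS)" by blast
  show "\<Union>KS \<subseteq> orbits KK (topspace X) \<phi> \<and> openin X (\<Union> (\<Union>KS))"
    using h o unfolding e by blast
qed

abbreviation "T \<equiv> orbit_space_topology KK X \<phi>"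

lemma openT: "openin T W \<longleftrightarrow> W \<subseteq> orbits KK (topspace X) \<phi> \<and> openin X (\<Union>W)"
  unfolding orbit_space_topology_def using istop by simp

lemma Union_orbits: "\<Union>(orbits KK (topspace X) \<phi>) = topspace X"
  unfolding orbits_K using self_in pi_sub by blast

lemma topT: "topspace T = orbits KK (topspace X) \<phi>"
proof -
  have "openin T (orbits KK (topspace X) \<phi>)" using openT Union_orbits by simp
  then have "orbits KK (topspace X) \<phi> \<subseteq> topspace T" by (rule openin_subset)
  moreover have "topspace T \<subseteq> orbits KK (topspace X) \<phi>" using openT[of "topspace T"] by simp
  ultimately show ?thesis by (rule subset_antisym[rotated])
qed

lemma phi_inv_l: assumes "k \<in> carrier G" "u \<in> topspace X" shows "\<phi> (inv\<^bsub>G\<^esub> k) (\<phi> k u) = u"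
proof -
  interpret grp: group G by (rule grpG)
  have "\<phi> (inv\<^bsub>G\<^esub> k) (\<phi> k u) = \<phi> (inv\<^bsub>G\<^esub> k \<otimes>\<^bsub>G\<^esub> k) u"
    using composition_rule[OF assms(2) grp.inv_closed[OF assms(1)] assms(1)] by simp
  also have "\<dots> = u" using assms by (simp add: phi_one)
  finally show ?thesis .
qed

lemma phi_inv_r: assumes "k \<in> carrier G" "u \<in> topspace X" shows "\<phi> k (\<phi> (inv\<^bsub>G\<^esub> k) u) = u"
proof -
  interpret grp: group G by (rule grpG)
  have "\<phi> k (\<phi> (inv\<^bsub>G\<^esub> k) u) = \<phi> (k \<otimes>\<^bsub>G\<^esub> inv\<^bsub>G\<^esub> k) u"
    using composition_rule[OF assms(2) assms(1) grp.inv_closed[OF assms(1)]] by simp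
  also have "\<dots> = u" using assms by (simp add: phi_one)
  finally show ?thesis .
qed

lemma open_pq: assumes U: "openin X U" shows "openin T (pq ` U)"
proof -
  have UE: "U \<subseteq> topspace X" using openin_subset[OF U] .
  have eq: "\<Union>(pq ` U) = (\<Union>k\<in>K. {y \<in> topspace X. \<phi> (inv\<^bsub>G\<^esub> k) y \<in> U})"
  proof (rule equalityI; rule subsetI)
    fix y assume "y \<in> \<Union>(pq ` U)"
    then obtain u where u: "u \<in> U" "y \<in> pq u" by blast
    obtain k where k: "k \<in> K" "y = \<phi> k u" using pq_E[OF u(2)] by blast
    have uE: "u \<in> topspace X" using u(1) UE by blast
    have yE: "y \<in> topspace X" using k phi_closed[OF Kcar[OF k(1)] uE] by simp
    have "\<phi> (inv\<^bsub>G\<^esub> k) y = u" using k(2) phi_inv_l[OF Kcar[OF k(1)] uE] by simp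
    then show "y \<in> (\<Union>k\<in>K. {y \<in> topspace X. \<phi> (inv\<^bsub>G\<^esub> k) y \<in> U})" using yE u(1) k(1) by blast
  next
    fix y assume "y \<in> (\<Union>k\<in>K. {y \<in> topspace X. \<phi> (inv\<^bsub>G\<^esub> k) y \<in> U})"
    then obtain k where k: "k \<in> K" "y \<in> topspace X" "\<phi> (inv\<^bsub>G\<^esub> k) y \<in> U" by blast
    have "y = \<phi> k (\<phi> (inv\<^bsub>G\<^esub> k) y)" using phi_inv_r[OF Kcar[OF k(1)] k(2)] by simp
    then have "y \<in> pq (\<phi> (inv\<^bsub>G\<^esub> k) y)" by (rule pq_I[OF k(1)])
    then show "y \<in> \<Union>(pq ` U)" using k(3) by blast
  qed
  have "openin X (\<Union>k\<in>K. {y \<in> topspace X. \<phi> (inv\<^bsub>G\<^esub> k) y \<in> U})"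
  proof (rule openin_Union, clarify)
    fix k assume k: "k \<in> K"
    have "inv\<^bsub>G\<^esub> k \<in> carrier G" using Kcar[OF K_inv[OF k]] .
    then show "openin X {y \<in> topspace X. \<phi> (inv\<^bsub>G\<^esub> k) y \<in> U}"
      using openin_continuous_map_preimage[OF cont U] by blast
  qed
  moreover have "pq ` U \<subseteq> orbits KK (topspace X) \<phi>" using UE unfolding orbits_K by blast
  ultimately show ?thesis unfolding openT eq by blast
qed

lemma pq_open_sub:
  assumes U: "openin X U" and V: "V \<subseteq> orbits KK (topspace X) \<phi>" and A: "A = \<Union>V"
  shows "openin (subtopology T V) (pq ` (U \<inter> A))"
proof -
  have "pq ` (U \<inter> A) = pq ` U \<inter> V"
  proof (rule equalityI; rule subsetI)
    fix Q assume "Q \<in> pq ` (U \<inter> A)"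
    then obtain x where x: "x \<in> U" "x \<in> A" "Q = pq x" by blast
    obtain Q' where Q': "Q' \<in> V" "x \<in> Q'" using x(2) A by blast
    have "Q' = pq x" using orbit_of_mem[OF subsetD[OF V Q'(1)] Q'(2)] by blast
    then show "Q \<in> pq ` U \<inter> V" using x Q' by blast
  next
    fix Q assume "Q \<in> pq ` U \<inter> V"
    then obtain u where u: "u \<in> U" "Q = pq u" "Q \<in> V" by blast
    have uE: "u \<in> topspace X" using u(1) openin_subset[OF U] by blast
    have "u \<in> A" using self_in[OF uE] u A by blast
    then show "Q \<in> pq ` (U \<inter> A)" using u by blast
  qed
  then show ?thesis unfolding openin_subtopology using open_pq[OF U] by blast
qed

abbreviation "FP \<equiv> quotient_fixed_points G K X \<phi>"

lemma FP_orbits: "FP \<subseteq> orbits KK (topspace X) \<phi>"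
  unfolding quotient_fixed_points_def by blast

lemma FP_fix: "Q \<in> FP \<Longrightarrow> g \<in> carrier G \<Longrightarrow> x \<in> Q \<Longrightarrow> pq (\<phi> g x) = Q"
  unfolding quotient_fixed_points_def by blast

lemma FP_I: "Q \<in> orbits KK (topspace X) \<phi> \<Longrightarrow> (\<And>g x. g \<in> carrier G \<Longrightarrow> x \<in> Q \<Longrightarrow> pq (\<phi> g x) = Q) \<Longrightarrow> Q \<in> FP"
  unfolding quotient_fixed_points_def by blast

lemma topY: "topspace (fixed_point_space G K X \<phi>) = FP"
  unfolding fixed_point_space_def using topT FP_orbits by auto

lemma key:
  assumes U: "openin X U" and inv: "\<forall>g\<in>carrier G. \<forall>x\<in>U. \<phi> g x \<in> U"
    and h: "continuous_map (prod_topology (top_of_set {0..1::real}) (subtopology X U)) X h"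
    and h0: "\<forall>x. h(0,x) = x" and h1: "\<forall>x. h(1,x) = c x"
    and heq: "\<forall>t\<in>{0..1}. \<forall>g\<in>carrier G. \<forall>x\<in>U. h(t, \<phi> g x) = \<phi> g (h(t,x))"
    and z: "z \<in> topspace X" and cz: "c ` U \<subseteq> orbit G \<phi> z"
  shows "openin (fixed_point_space G K X \<phi>) {Q \<in> FP. Q \<subseteq> U} \<and>
     (\<exists>c'. homotopic_with (\<lambda>_. True) (subtopology (fixed_point_space G K X \<phi>) {Q \<in> FP. Q \<subseteq> U})
              (fixed_point_space G K X \<phi>) id (\<lambda>_. c'))"
proof -
  define V where "V = {Q \<in> FP. Q \<subseteq> U}"
  define Y where "Y = fixed_point_space G K X \<phi>"
  have UE: "U \<subseteq> topspace X" using openin_subset[OF U] .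
  have sat: "pq x \<subseteq> U" if "x \<in> U" for x
  proof
    fix y assume "y \<in> pq x"
    then obtain k where "k \<in> K" "y = \<phi> k x" using pq_E by blast
    then show "y \<in> U" using inv that Kcar by blast
  qed
  define W where "W = {Q \<in> orbits KK (topspace X) \<phi>. Q \<subseteq> U}"
  have UW: "\<Union>W = U"
  proof
    show "U \<subseteq> \<Union>W"
    proof
      fix x assume x: "x \<in> U"
      have "pq x \<in> W" unfolding W_def orbits_K using x UE sat by blast
      then show "x \<in> \<Union>W" using self_in x UE by blast
    qed
  qed (auto simp: W_def)
  have oW: "openin T W" unfolding openT UW using U by (simp add: W_def)
  have VW: "V = W \<inter> FP" unfolding V_def W_def using FP_orbits by blast
  have oV: "openin Y V" unfolding Y_def fixed_point_space_def openin_subtopology using oW VW by blast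
  define A where "A = \<Union>V"
  have AU: "A \<subseteq> U" unfolding A_def V_def by blast
  have AE: "A \<subseteq> topspace X" using AU UE by blast
  have Vorb: "V \<subseteq> orbits KK (topspace X) \<phi>" unfolding V_def using FP_orbits by blast
  have VQ: "Q = pq x \<and> x \<in> topspace X" if "Q \<in> V" "x \<in> Q" for Q x
    using orbit_of_mem Vorb that by blast
  have I01: "topspace (top_of_set {0..1::real}) = {0..1}" by simp
  have hA: "continuous_map (prod_topology (top_of_set {0..1::real}) (subtopology X A)) X h"
  proof -
    have "continuous_map (subtopology (prod_topology (top_of_set {0..1::real}) (subtopology X U)) ({0..1} \<times> A)) X h"
      using continuous_map_from_subtopology[OF h] .
    moreover have "subtopology (prod_topology (top_of_set {0..1::real}) (subtopology X U)) ({0..1} \<times> A)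
       = prod_topology (top_of_set {0..1::real}) (subtopology X A)"
      unfolding subtopology_Times subtopology_subtopology using AU
      by (simp add: Int_absorb1 inf.absorb2)
    ultimately show ?thesis by simp
  qed
  have hE: "h(t,x) \<in> topspace X" if "t \<in> {0..1}" "x \<in> U" for t x
  proof -
    have "(t,x) \<in> topspace (prod_topology (top_of_set {0..1::real}) (subtopology X U))" using that UE by auto
    then show ?thesis using continuous_map_image_subset_topspace[OF h] by blast
  qed
  have WD: "pq (h(t,y)) = pq (h(t,x))" if t: "t \<in> {0..1}" and x: "x \<in> U" and y: "y \<in> pq x" for t x y
  proof -
    obtain k where k: "k \<in> K" "y = \<phi> k x" using pq_E[OF y] by blast
    have "h(t,y) = \<phi> k (h(t,x))" using heq t x k Kcar by blast
    then have "h(t,y) \<in> pq (h(t,x))" by (rule pq_I[OF k(1)])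
    then show ?thesis using pi_eq hE[OF t x] by blast
  qed
  have FIX: "pq (h(t,x)) \<in> FP" if t: "t \<in> {0..1}" and Q: "Q \<in> V" and x: "x \<in> Q" for t Q x
  proof (rule FP_I)
    have Qx: "Q = pq x" and xE: "x \<in> topspace X" using VQ[OF Q x] by auto
    have QU: "Q \<subseteq> U" using Q unfolding V_def by blast
    have xU: "x \<in> U" using QU x by blast
    show "pq (h(t,x)) \<in> orbits KK (topspace X) \<phi>" unfolding orbits_K using hE[OF t xU] by blast
    fix g y assume g: "g \<in> carrier G" and y: "y \<in> pq (h(t,x))"
    obtain k where k: "k \<in> K" "y = \<phi> k (h(t,x))" using pq_E[OF y] by blast
    have kG: "k \<in> carrier G" using Kcar k(1) .
    have kx: "\<phi> k x \<in> Q" using pq_I[OF k(1) refl] Qx by simp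
    have kxU: "\<phi> k x \<in> U" using kx QU by blast
    have y2: "y = h(t, \<phi> k x)" using heq t kG xU k(2) by simp
    have gy: "\<phi> g y = h(t, \<phi> g (\<phi> k x))" using heq t g kxU y2 by simp
    have x'E: "\<phi> g (\<phi> k x) \<in> topspace X" using phi_closed[OF g] phi_closed[OF kG xE] by blast
    have "\<phi> g (\<phi> k x) \<in> pq (\<phi> g (\<phi> k x))" using self_in[OF x'E] .
    also have "pq (\<phi> g (\<phi> k x)) = Q" using FP_fix[OF _ g kx] Q unfolding V_def by blast
    finally have "\<phi> g (\<phi> k x) \<in> pq x" using Qx by simp
    then have "pq (h(t, \<phi> g (\<phi> k x))) = pq (h(t,x))" using WD[OF t xU] by blast
    then show "pq (\<phi> g y) = pq (h(t,x))" using gy by simp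
  qed
  define rep where "rep Q = (SOME x. x \<in> Q)" for Q :: "'x set"
  have rep: "rep Q \<in> Q" if QV: "Q \<in> V" for Q
  proof -
    obtain x where "x \<in> topspace X" "Q = pq x" using QV Vorb unfolding orbits_K by blast
    then have "\<exists>x. x \<in> Q" using self_in by blast
    then show ?thesis unfolding rep_def by (rule someI_ex)
  qed
  define Hq where "Hq p = pq (h(fst p, rep (snd p)))" for p
  have CONST: "pq (c x1) = pq (c x2)" if "Q1 \<in> V" "x1 \<in> Q1" "Q2 \<in> V" "x2 \<in> Q2" for Q1 Q2 x1 x2
  proof -
    interpret grp: group G by (rule grpG)
    have x1U: "x1 \<in> U" and x2U: "x2 \<in> U" using that unfolding V_def by blast+
    obtain g1 where g1: "g1 \<in> carrier G" "c x1 = \<phi> g1 z" using cz x1U unfolding orbit_def by blast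
    obtain g2 where g2: "g2 \<in> carrier G" "c x2 = \<phi> g2 z" using cz x2U unfolding orbit_def by blast
    have F1: "pq (c x1) \<in> FP" using FIX[of 1, OF _ that(1,2)] h1 by simp
    have c1E: "c x1 \<in> topspace X" using hE[of 1 x1] x1U h1 by simp
    have gg: "g2 \<otimes>\<^bsub>G\<^esub> inv\<^bsub>G\<^esub> g1 \<in> carrier G" using g1 g2 by simp
    have "\<phi> (g2 \<otimes>\<^bsub>G\<^esub> inv\<^bsub>G\<^esub> g1) (c x1) = \<phi> g2 (\<phi> (inv\<^bsub>G\<^esub> g1) (\<phi> g1 z))"
      using composition_rule[OF c1E g2(1) grp.inv_closed[OF g1(1)]] g1(2) by simp
    also have "\<dots> = c x2" using phi_inv_l[OF g1(1) z] g2(2) by simp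
    finally have e: "\<phi> (g2 \<otimes>\<^bsub>G\<^esub> inv\<^bsub>G\<^esub> g1) (c x1) = c x2" .
    have "pq (\<phi> (g2 \<otimes>\<^bsub>G\<^esub> inv\<^bsub>G\<^esub> g1) (c x1)) = pq (c x1)"
      using FP_fix[OF F1 gg self_in[OF c1E]] .
    then show ?thesis using e by simp
  qed
  have YV: "subtopology Y V = subtopology T V"
    unfolding Y_def fixed_point_space_def subtopology_subtopology using V_def by (metis (no_types, lifting) Int_absorb1 mem_Collect_eq subsetI)
  have topTV: "topspace (subtopology T V) = V" using topT Vorb by auto
  have contT: "continuous_map (prod_topology (top_of_set {0..1::real}) (subtopology T V)) T Hq"
    unfolding continuous_map
  proof (intro conjI allI impI)
    show "Hq ` topspace (prod_topology (top_of_set {0..1::real}) (subtopology T V)) \<subseteq> topspace T"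
    proof clarify
      fix t Q assume "(t,Q) \<in> topspace (prod_topology (top_of_set {0..1::real}) (subtopology T V))"
      then have t: "t \<in> {0..1}" and Q: "Q \<in> V" using topTV by auto
      show "Hq (t,Q) \<in> topspace T" using FIX[OF t Q rep[OF Q]] FP_orbits topT unfolding Hq_def by auto
    qed
  next
    fix W' assume W': "openin T W'"
    have W'o: "W' \<subseteq> orbits KK (topspace X) \<phi>" and W'U: "openin X (\<Union>W')" using W' openT by auto
    define S where "S = {p \<in> topspace (prod_topology (top_of_set {0..1::real}) (subtopology X A)). h p \<in> \<Union>W'}"
    have oS: "openin (prod_topology (top_of_set {0..1::real}) (subtopology X A)) S"
      unfolding S_def by (rule openin_continuous_map_preimage[OF hA W'U])
    define pm where "pm p = (fst p, pq (snd p))" for p :: "real \<times> 'x"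
    have eq: "{p \<in> topspace (prod_topology (top_of_set {0..1::real}) (subtopology T V)). Hq p \<in> W'} = pm ` S"
    proof (rule equalityI; rule subsetI)
      fix p assume p: "p \<in> {p \<in> topspace (prod_topology (top_of_set {0..1::real}) (subtopology T V)). Hq p \<in> W'}"
      obtain t Q where tQ: "p = (t,Q)" by fastforce
      have t: "t \<in> {0..1}" and Q: "Q \<in> V" and HW: "Hq (t,Q) \<in> W'" using p tQ topTV by auto
      define x where "x = rep Q"
      have xQ: "x \<in> Q" using rep[OF Q] x_def by simp
      have Qx: "Q = pq x" and xE: "x \<in> topspace X" using VQ[OF Q xQ] by auto
      have xA: "x \<in> A" using xQ Q A_def by blast
      have xU: "x \<in> U" using xA AU by blast
      have "h(t,x) \<in> pq (h(t,x))" using self_in hE[OF t xU] by blast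
      moreover have "pq (h(t,x)) \<in> W'" using HW unfolding Hq_def x_def by simp
      ultimately have "(t,x) \<in> S" unfolding S_def using t xA xE by auto
      moreover have "pm (t,x) = p" using tQ Qx pm_def by simp
      ultimately show "p \<in> pm ` S" by (metis image_eqI)
    next
      fix p assume "p \<in> pm ` S"
      then obtain t x where tx: "(t,x) \<in> S" "p = (t, pq x)" unfolding pm_def by force
      have t: "t \<in> {0..1}" and xA: "x \<in> A" and hW: "h(t,x) \<in> \<Union>W'" using tx(1) unfolding S_def by auto
      obtain Q where Q: "Q \<in> V" "x \<in> Q" using xA A_def by blast
      have Qx: "Q = pq x" and xE: "x \<in> topspace X" using VQ[OF Q] by auto
      have xU: "x \<in> U" using xA AU by blast
      have "Hq (t, Q) = pq (h(t,x))" unfolding Hq_def using WD[OF t xU] rep[OF Q(1)] Qx by simp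
      moreover obtain Q'' where "Q'' \<in> W'" "h(t,x) \<in> Q''" using hW by blast
      moreover have "Q'' = pq (h(t,x))" using orbit_of_mem W'o calculation(2,3) by blast
      ultimately have "Hq (t,Q) \<in> W'" by simp
      then show "p \<in> {p \<in> topspace (prod_topology (top_of_set {0..1::real}) (subtopology T V)). Hq p \<in> W'}"
        using tx(2) Qx t Q(1) topTV by auto
    qed
    show "openin (prod_topology (top_of_set {0..1::real}) (subtopology T V))
            {p \<in> topspace (prod_topology (top_of_set {0..1::real}) (subtopology T V)). Hq p \<in> W'}"
      unfolding eq openin_prod_topology_alt
    proof clarify
      fix t Q p assume p: "p \<in> S" and e: "(t, Q) = pm p"
      obtain t0 x where px: "p = (t0,x)" by fastforce
      have tt: "t0 = t" and Qx: "Q = pq x" using e px pm_def by auto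
      obtain U1 V1 where UV: "openin (top_of_set {0..1::real}) U1" "openin (subtopology X A) V1" "t \<in> U1" "x \<in> V1" "U1 \<times> V1 \<subseteq> S"
      proof -
        have tx: "(t,x) \<in> S" using p px tt by simp
        have "\<forall>a b. (a,b) \<in> S \<longrightarrow> (\<exists>U V. openin (top_of_set {0..1::real}) U \<and> openin (subtopology X A) V \<and> a \<in> U \<and> b \<in> V \<and> U \<times> V \<subseteq> S)"
          using oS unfolding openin_prod_topology_alt .
        then have "\<exists>U V. openin (top_of_set {0..1::real}) U \<and> openin (subtopology X A) V \<and> t \<in> U \<and> x \<in> V \<and> U \<times> V \<subseteq> S"
          using tx by blast
        then show ?thesis using that by blast
      qed
      obtain U2 where U2: "openin X U2" "V1 = U2 \<inter> A" using UV(2) unfolding openin_subtopology by blast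
      have o2: "openin (subtopology T V) (pq ` V1)" using pq_open_sub[OF U2(1) Vorb A_def] U2(2) by simp
      have "U1 \<times> pq ` V1 \<subseteq> pm ` S"
      proof clarify
        fix s y assume "s \<in> U1" "y \<in> V1"
        then have "(s,y) \<in> S" using UV(5) by blast
        then show "(s, pq y) \<in> pm ` S" unfolding pm_def by force
      qed
      then show "\<exists>U V'. openin (top_of_set {0..1::real}) U \<and> openin (subtopology T V) V' \<and> t \<in> U \<and> Q \<in> V' \<and> U \<times> V' \<subseteq> pm ` S"
        using UV(1,3,4) o2 Qx by blast
    qed
  qed
  have contY: "continuous_map (prod_topology (top_of_set {0..1::real}) (subtopology Y V)) Y Hq"
    unfolding YV
  proof -
    have "Hq \<in> topspace (prod_topology (top_of_set {0..1::real}) (subtopology T V)) \<rightarrow> FP"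
    proof
      fix p assume "p \<in> topspace (prod_topology (top_of_set {0..1::real}) (subtopology T V))"
      then obtain t Q where "p = (t,Q)" "t \<in> {0..1}" "Q \<in> V" using topTV by auto
      then show "Hq p \<in> FP" using FIX rep unfolding Hq_def by auto
    qed
    then show "continuous_map (prod_topology (top_of_set {0..1::real}) (subtopology T V)) Y Hq"
      unfolding Y_def fixed_point_space_def using contT continuous_map_into_subtopology by blast
  qed
  define c' where "c' = Hq (1, SOME Q. Q \<in> V)"
  have b0: "Hq (0, Q) = id Q" and b1: "Hq (1, Q) = c'" if "Q \<in> topspace (subtopology Y V)" for Q
  proof -
    have Q: "Q \<in> V" using that unfolding YV topTV .
    have "Q = pq (rep Q)" using VQ[OF Q rep[OF Q]] by blast
    then show "Hq (0, Q) = id Q" unfolding Hq_def using h0 by simp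
    have ex: "\<exists>Q. Q \<in> V" using Q by blast
    have Q0: "(SOME Q. Q \<in> V) \<in> V" using someI_ex[OF ex] .
    show "Hq (1, Q) = c'" unfolding c'_def Hq_def using h1 CONST[OF Q rep[OF Q] Q0 rep[OF Q0]] by simp
  qed
  have hom: "homotopic_with (\<lambda>_. True) (subtopology Y V) Y id (\<lambda>_. c')"
  proof (subst homotopic_with)
    show "\<exists>h. continuous_map (prod_topology (subtopology euclideanreal {0..1}) (subtopology Y V)) Y h \<and>
          (\<forall>x\<in>topspace (subtopology Y V). h (0, x) = id x) \<and>
          (\<forall>x\<in>topspace (subtopology Y V). h (1, x) = c') \<and> (\<forall>t\<in>{0..1}. True)"
      using contY b0 b1 by blast
  qed simp
  show ?thesis using oV hom unfolding Y_def V_def by blast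
qed

end
lemma act_cont:
  assumes "continuous_action G TG X \<phi>" "g \<in> carrier G"
  shows "continuous_map X X (\<phi> g)"
proof -
  have tg: "topspace TG = carrier G" and c: "continuous_map (prod_topology TG X) X (\<lambda>(g, x). \<phi> g x)"
    using assms(1) unfolding continuous_action_def topological_group_def by auto
  have "continuous_map X (prod_topology TG X) (\<lambda>x. (g, x))"
    by (intro continuous_map_pairedI) (auto simp: tg assms(2))
  then have "continuous_map X X ((\<lambda>(g, x). \<phi> g x) \<circ> (\<lambda>x. (g, x)))"
    using c continuous_map_compose by blast
  then show ?thesis by (simp add: o_def)
qed

theorem mainTheorem9:
  fixes G :: "('g, 'b) monoid_scheme" and TG :: "'g topology"
    and X :: "'x topology" and \<phi> :: "'g \<Rightarrow> 'x \<Rightarrow> 'x"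
  assumes "compact_Lie_group G TG"
    and "continuous_action G TG X \<phi>"
    and "metrizable_space X"
  shows "\<forall>K. K \<lhd> G \<and> closedin TG K \<longrightarrow>
           LS_cat (fixed_point_space G K X \<phi>) \<le> equivariant_cat G X \<phi>"
proof (intro allI impI)
  fix K assume "K \<lhd> G \<and> closedin TG K"
  then have sub: "subgroup K G" using normal_imp_subgroup by blast
  have ga: "group_action G (topspace X) \<phi>" using assms(2) unfolding continuous_action_def by blast
  interpret E: eqsetup G K X \<phi>
    by (rule eqsetup.intro[OF ga sub act_cont[OF assms(2)]])
  show "LS_cat (fixed_point_space G K X \<phi>) \<le> equivariant_cat G X \<phi>"
    unfolding LS_cat_def equivariant_cat_def
  proof (rule Inf_superset_mono, clarify)
    fix k and U :: "nat \<Rightarrow> 'x set"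
    assume H: "\<forall>i<k. openin X (U i) \<and> (\<forall>g\<in>carrier G. \<forall>x\<in>U i. \<phi> g x \<in> U i) \<and>
         (\<exists>c. homotopic_with (\<lambda>h. \<forall>g\<in>carrier G. \<forall>x\<in>U i. h (\<phi> g x) = \<phi> g (h x))
                 (subtopology X (U i)) X id c \<and> (\<exists>z\<in>topspace X. c ` U i \<subseteq> orbit G \<phi> z))"
      and cov: "topspace X \<subseteq> (\<Union>i<k. U i)"
    define V where "V i = {Q \<in> quotient_fixed_points G K X \<phi>. Q \<subseteq> U i}" for i
    have P: "openin (fixed_point_space G K X \<phi>) (V i) \<and>
         (\<exists>c. homotopic_with (\<lambda>_. True) (subtopology (fixed_point_space G K X \<phi>) (V i)) (fixed_point_space G K X \<phi>) id (\<lambda>_. c))"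
      if i: "i < k" for i
    proof -
      have oU: "openin X (U i)" and inv: "\<forall>g\<in>carrier G. \<forall>x\<in>U i. \<phi> g x \<in> U i" using H i by auto
      obtain c z where hc: "homotopic_with (\<lambda>h. \<forall>g\<in>carrier G. \<forall>x\<in>U i. h (\<phi> g x) = \<phi> g (h x))
                 (subtopology X (U i)) X id c" and z: "z \<in> topspace X" and cz: "c ` U i \<subseteq> orbit G \<phi> z"
        using H i by blast
      obtain h where h: "continuous_map (prod_topology (top_of_set {0..1::real}) (subtopology X (U i))) X h"
        and h0: "\<forall>x. h(0,x) = id x" and h1: "\<forall>x. h(1,x) = c x"
        and heq: "\<forall>t\<in>{0..1}. \<forall>g\<in>carrier G. \<forall>x\<in>U i. h(t, \<phi> g x) = \<phi> g (h(t,x))"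
        using hc unfolding homotopic_with_def by blast
      show ?thesis unfolding V_def
        using E.key[OF oU inv h _ h1 heq z cz] h0 by simp
    qed
    have covV: "topspace (fixed_point_space G K X \<phi>) \<subseteq> (\<Union>i<k. V i)"
    proof
      fix Q assume "Q \<in> topspace (fixed_point_space G K X \<phi>)"
      then have Q: "Q \<in> quotient_fixed_points G K X \<phi>" using E.topY by simp
      then obtain x where x: "x \<in> topspace X" "Q = E.pq x" using E.FP_orbits unfolding E.orbits_K by blast
      obtain i where i: "i < k" "x \<in> U i" using cov x(1) by blast
      have "Q \<subseteq> U i"
      proof
        fix y assume "y \<in> Q"
        then obtain kk where "kk \<in> K" "y = \<phi> kk x" using E.pq_E x(2) by blast
        then show "y \<in> U i" using H i E.Kcar by blast
      qed
      then show "Q \<in> (\<Union>i<k. V i)" using Q i unfolding V_def by blast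
    qed
    show "\<exists>ka. enat k = enat ka \<and> (\<exists>U. (\<forall>i<ka. openin (fixed_point_space G K X \<phi>) (U i) \<and>
        (\<exists>c. homotopic_with (\<lambda>_. True) (subtopology (fixed_point_space G K X \<phi>) (U i)) (fixed_point_space G K X \<phi>) id (\<lambda>_. c))) \<and>
        topspace (fixed_point_space G K X \<phi>) \<subseteq> (\<Union>i<ka. U i))"
      using P covV by blast
  qed
qed

end
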